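(* Let $f:\mathbb{R}^D\to\mathbb{R}$ be differentiable, $L$-smooth, and bounded: $f_{\mathrm{inf}}\le f(\theta)\le f_{\mathrm{sup}}$ for all $\theta$, with $f_{\mathrm{inf}},f_{\mathrm{sup}}$ finite. Fix $\beta_1,\beta_2\in[0,1)$, $\epsilon>0$, a deterministic $\theta_0\in\mathbb{R}^D$, and learning rates $\alpha_t$ with $a_1/\sqrt{t}\le\alpha_t\le a_2/\sqrt{t}$ for all $t\ge1$, for constants $0<a_1\le a_2$ (i.e. $\alpha_t=\Theta(1/\sqrt t)$). Run ADOPT: $v_0=g_0\odot g_0$, $m_1=g_1/\max\{\sqrt{v_0},\epsilon\}$, and for $t\ge1$: $$\theta_t=\theta_{t-1}-\alpha_t m_t,\quad v_t=\beta_2 v_{t-1}+(1-\beta_2)g_t\odot g_t,\quad m_{t+1}=\beta_1 m_t+(1-\beta_1)\frac{g_{t+1}}{\max\{\sqrt{v_t},\epsilon\}},$$ where $g_0$ is a random vector with $\mathbb{E}\|g_0\|^2\le G^2$ and, for $t\ge1$, $\mathbb{E}[g_t\mid g_0,\dots,g_{t-1}]=\nabla f(\theta_{t-1})$ and $\mathbb{E}\|g_t\|^2\le G^2$ ($G>0$ a constant). Then there is a constant $K$ independent of $T$ such that for all $T\ge1$, $$\min_{t=1,\dots,T}\Big\{\mathbb{E}\big[\|\nabla f(\theta_{t-1})\|^{4/3}\big]^{3/2}\Big\}\le K/\sqrt{T}.$$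
   Context: $L$-smooth means $\|\nabla f(x)-\nabla f(y)\|\le L\|x-y\|$ for all $x,y$, with $L>0$. Norms are Euclidean; $\odot$, square root, division and $\max\{\cdot,\epsilon\}$ act elementwise. *)

theory Defs
  imports "HOL-Analysis.Analysis" "HOL-Probability.Probability"
begin

text \<open>One ADOPT step quantities. adopt_state ... n = (theta_n, v_n, m_(n+1)),
  computed deterministically from theta_0 and the sample sequence gs.\<close>

definition emax_sqrt_div :: "real \<Rightarrow> real^'d \<Rightarrow> real^'d \<Rightarrow> real^'d" where
  "emax_sqrt_div eps g v = (\<chi> i. g $ i / max (sqrt (v $ i)) eps)"

fun adopt_state ::
  "real \<Rightarrow> real \<Rightarrow> real \<Rightarrow> (nat \<Rightarrow> real) \<Rightarrow> real^'d \<Rightarrow> (nat \<Rightarrow> real^'d) \<Rightarrow> nat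
     \<Rightarrow> (real^'d) \<times> (real^'d) \<times> (real^'d)" where
  "adopt_state beta1 beta2 eps alpha theta0 gs 0 =
     (let v0 = (\<chi> i. gs 0 $ i * gs 0 $ i)
      in (theta0, v0, emax_sqrt_div eps (gs 1) v0))"
| "adopt_state beta1 beta2 eps alpha theta0 gs (Suc n) =
     (case adopt_state beta1 beta2 eps alpha theta0 gs n of (theta, v, m) \<Rightarrow>
       let theta' = theta - alpha (Suc n) *\<^sub>R m;
           v' = (\<chi> i. beta2 * v $ i + (1 - beta2) * (gs (Suc n) $ i * gs (Suc n) $ i));
           m' = beta1 *\<^sub>R m + (1 - beta1) *\<^sub>R emax_sqrt_div eps (gs (Suc (Suc n))) v'
       in (theta', v', m'))"

definition adopt_theta ::
  "real \<Rightarrow> real \<Rightarrow> real \<Rightarrow> (nat \<Rightarrow> real) \<Rightarrow> real^'d \<Rightarrow> (nat \<Rightarrow> real^'d) \<Rightarrow> nat \<Rightarrow> real^'d" where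
  "adopt_theta beta1 beta2 eps alpha theta0 gs n = fst (adopt_state beta1 beta2 eps alpha theta0 gs n)"

definition gen_filtration :: "'a measure \<Rightarrow> (nat \<Rightarrow> 'a \<Rightarrow> real^'d) \<Rightarrow> nat \<Rightarrow> 'a measure" where
  "gen_filtration M g t =
     sigma (space M) {g i -` B \<inter> space M | i B. i < t \<and> B \<in> sets borel}"

end

theory Submission
  imports Defs
begin

lemma vec_meas:
  fixes h :: "'a \<Rightarrow> real^'d"
  assumes "\<And>i. (\<lambda>x. h x $ i) \<in> borel_measurable N"
  shows "h \<in> borel_measurable N"
proof (subst borel_measurable_euclidean_space, intro ballI)
  fix b :: "real^'d" assume "b \<in> Basis"
  then obtain i where "b = axis i 1" by (auto simp: Basis_vec_def)
  then show "(\<lambda>x. h x \<bullet> b) \<in> borel_measurable N" using assms[of i] by (simp add: inner_axis)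
qed
lemma nth_meas[measurable]:
  fixes h :: "'a \<Rightarrow> real^'d"
  assumes "h \<in> borel_measurable N"
  shows "(\<lambda>x. h x $ i) \<in> borel_measurable N"
proof -
  have "axis i 1 \<in> (Basis :: (real^'d) set)" by (auto simp: Basis_vec_def)
  then have "(\<lambda>x. h x \<bullet> axis i 1) \<in> borel_measurable N" using assms borel_measurable_euclidean_space[of h N] by blast
  then show ?thesis by (simp add: inner_axis)
qed

lemma descent:
  fixes f :: "'v::real_inner \<Rightarrow> real"
  assumes grad: "\<And>x. GDERIV f x :> df x"
    and smooth: "\<And>x y. norm (df x - df y) \<le> L * norm (x - y)"
  shows "f y \<le> f x + df x \<bullet> (y - x) + L / 2 * (norm (y - x))\<^sup>2"
proof -
  define h where "h = y - x"
  define \<phi> where "\<phi> s = f (x + s *\<^sub>R h) - s * (df x \<bullet> h) - L / 2 * s\<^sup>2 * (norm h)\<^sup>2" for s :: real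
  have D: "DERIV \<phi> s :> (df (x + s *\<^sub>R h) \<bullet> h - df x \<bullet> h - L * s * (norm h)\<^sup>2)" for s
  proof -
    have l: "((\<lambda>t. x + t *\<^sub>R h) has_derivative (\<lambda>t. t *\<^sub>R h)) (at s)"
      by (auto intro!: derivative_eq_intros)
    have "((\<lambda>t. f (x + t *\<^sub>R h)) has_derivative (\<lambda>t. (t *\<^sub>R h) \<bullet> df (x + s *\<^sub>R h))) (at s)"
      using has_derivative_compose[OF l, of f] grad[of "x + s *\<^sub>R h"] unfolding gderiv_def by blast
    then have "DERIV (\<lambda>t. f (x + t *\<^sub>R h)) s :> (h \<bullet> df (x + s *\<^sub>R h))"
      by (rule has_derivative_imp_has_field_derivative) (simp add: algebra_simps)
    then show ?thesis unfolding \<phi>_def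
      by (auto intro!: derivative_eq_intros simp: inner_commute)
  qed
  have "\<phi> 1 \<le> \<phi> 0"
  proof (rule DERIV_nonpos_imp_nonincreasing[of 0 1])
    fix s :: real assume s: "0 \<le> s" "s \<le> 1"
    have "(df (x + s *\<^sub>R h) - df x) \<bullet> h \<le> norm (df (x + s *\<^sub>R h) - df x) * norm h"
      by (rule norm_cauchy_schwarz)
    also have "\<dots> \<le> L * norm (s *\<^sub>R h) * norm h"
      using smooth[of "x + s *\<^sub>R h" x] by (intro mult_right_mono) auto
    also have "\<dots> = L * s * (norm h)\<^sup>2" using s by (simp add: power2_eq_square)
    finally show "\<exists>y. DERIV \<phi> s :> y \<and> y \<le> 0" using D[of s] by (intro exI[of _ _]) (auto simp: inner_diff_left)
  qed simp
  then show ?thesis unfolding \<phi>_def h_def by (simp add: algebra_simps)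
qed

lemma st_0: "adopt_state b1 b2 e al t0 gs 0 =
   (t0, (\<chi> i. gs 0 $ i * gs 0 $ i), emax_sqrt_div e (gs 1) (\<chi> i. gs 0 $ i * gs 0 $ i))"
  by (simp add: Let_def)

lemma st_Suc: "adopt_state b1 b2 e al t0 gs (Suc n) =
  (let S = adopt_state b1 b2 e al t0 gs n;
       v' = (\<chi> i. b2 * fst (snd S) $ i + (1 - b2) * (gs (Suc n) $ i * gs (Suc n) $ i))
   in (fst S - al (Suc n) *\<^sub>R snd (snd S), v',
       b1 *\<^sub>R snd (snd S) + (1 - b1) *\<^sub>R emax_sqrt_div e (gs (Suc (Suc n))) v'))"
  by (simp add: Let_def split: prod.split)

declare adopt_state.simps[simp del]

lemma st_dep_full:
  "(\<And>s. s \<le> Suc n \<Longrightarrow> gs s = gs' s) \<Longrightarrow>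
   adopt_state b1 b2 e al t0 gs n = adopt_state b1 b2 e al t0 gs' n"
proof (induction n)
  case 0 then show ?case by (simp add: st_0)
next
  case (Suc n)
  have "adopt_state b1 b2 e al t0 gs n = adopt_state b1 b2 e al t0 gs' n"
    using Suc.prems by (intro Suc.IH) auto
  then show ?case using Suc.prems[of "Suc n"] Suc.prems[of "Suc (Suc n)"] by (simp add: st_Suc Let_def)
qed

lemma st_dep_tv:
  assumes "\<And>s. s \<le> n \<Longrightarrow> gs s = gs' s"
  shows "fst (adopt_state b1 b2 e al t0 gs n) = fst (adopt_state b1 b2 e al t0 gs' n)
    \<and> fst (snd (adopt_state b1 b2 e al t0 gs n)) = fst (snd (adopt_state b1 b2 e al t0 gs' n))"
proof (cases n)
  case 0 then show ?thesis using assms by (simp add: st_0)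
next
  case (Suc k)
  have "adopt_state b1 b2 e al t0 gs k = adopt_state b1 b2 e al t0 gs' k"
    using assms Suc by (intro st_dep_full) auto
  then show ?thesis using Suc assms[of n] by (simp add: st_Suc Let_def)
qed

lemma emax_meas[measurable]:
  fixes h v :: "'a \<Rightarrow> real^'d"
  assumes "h \<in> borel_measurable N" "v \<in> borel_measurable N"
  shows "(\<lambda>x. emax_sqrt_div e (h x) (v x)) \<in> borel_measurable N"
  unfolding emax_sqrt_div_def by (rule vec_meas) (use assms in simp)

lemma st_meas:
  fixes gg :: "nat \<Rightarrow> 'a \<Rightarrow> real^'d"
  assumes "\<And>i. i \<le> Suc n \<Longrightarrow> gg i \<in> borel_measurable N"
  shows "(\<lambda>x. fst (adopt_state b1 b2 e al t0 (\<lambda>s. gg s x) n)) \<in> borel_measurable N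
    \<and> (\<lambda>x. fst (snd (adopt_state b1 b2 e al t0 (\<lambda>s. gg s x) n))) \<in> borel_measurable N
    \<and> (\<lambda>x. snd (snd (adopt_state b1 b2 e al t0 (\<lambda>s. gg s x) n))) \<in> borel_measurable N"
  using assms
proof (induction n)
  case 0
  have [measurable]: "gg 0 \<in> borel_measurable N" "gg (Suc 0) \<in> borel_measurable N" using 0 by auto
  have [measurable]: "(\<lambda>x. (\<chi> i. gg 0 x $ i * gg 0 x $ i)) \<in> borel_measurable N"
    by (rule vec_meas) simp
  show ?case by (simp add: st_0)
next
  case (Suc n)
  have IH: "(\<lambda>x. fst (adopt_state b1 b2 e al t0 (\<lambda>s. gg s x) n)) \<in> borel_measurable N"
    "(\<lambda>x. fst (snd (adopt_state b1 b2 e al t0 (\<lambda>s. gg s x) n))) \<in> borel_measurable N"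
    "(\<lambda>x. snd (snd (adopt_state b1 b2 e al t0 (\<lambda>s. gg s x) n))) \<in> borel_measurable N"
    using Suc by auto
  note [measurable] = IH
  have [measurable]: "gg (Suc n) \<in> borel_measurable N" "gg (Suc (Suc n)) \<in> borel_measurable N" using Suc.prems by auto
  have V[measurable]: "(\<lambda>x. (\<chi> i. b2 * fst (snd (adopt_state b1 b2 e al t0 (\<lambda>s. gg s x) n)) $ i
      + (1 - b2) * (gg (Suc n) x $ i * gg (Suc n) x $ i))) \<in> borel_measurable N"
    by (rule vec_meas) simp
  show ?case by (simp add: st_Suc Let_def)
qed

lemma gf_gen_sub: "{g i -` B \<inter> space M | i B. i < t \<and> B \<in> sets borel} \<subseteq> Pow (space M)"
  by auto

lemma gf_space: "space (gen_filtration M g t) = space M"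
  unfolding gen_filtration_def by (simp add: space_measure_of_conv)

lemma gf_sets: "sets (gen_filtration M g t) = sigma_sets (space M) {g i -` B \<inter> space M | i B. i < t \<and> B \<in> sets borel}"
  unfolding gen_filtration_def using gf_gen_sub by (intro sets_measure_of) 

lemma gf_meas: 
  fixes g :: "nat \<Rightarrow> 'a \<Rightarrow> real^'d"
  assumes "i < t" shows "g i \<in> borel_measurable (gen_filtration M g t)"
proof (rule measurableI)
  fix B :: "(real^'d) set" assume "B \<in> sets borel"
  then show "g i -` B \<inter> space (gen_filtration M g t) \<in> sets (gen_filtration M g t)"
    using assms unfolding gf_sets gf_space by (intro sigma_sets.Basic) blast
qed auto

lemma gf_sub:
  fixes g :: "nat \<Rightarrow> 'a \<Rightarrow> real^'d"
  assumes "\<And>i. g i \<in> borel_measurable M"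
  shows "subalgebra M (gen_filtration M g t)"
  unfolding subalgebra_def
proof
  show "sets (gen_filtration M g t) \<subseteq> sets M" unfolding gf_sets
    using assms by (intro sets.sigma_sets_subset) (auto intro: measurable_sets)
qed (simp add: gf_space)

locale adopt_loc = prob_space M for M :: "'a measure" +
  fixes f :: "real^'d \<Rightarrow> real" and df :: "real^'d \<Rightarrow> real^'d"
    and L f_inf f_sup beta1 beta2 eps a1 a2 G :: real
    and alpha :: "nat \<Rightarrow> real" and theta0 :: "real^'d"
    and g :: "nat \<Rightarrow> 'a \<Rightarrow> real^'d"
  assumes grad: "\<And>x. GDERIV f x :> df x"
    and L_pos: "L > 0"
    and smooth: "\<And>x y. norm (df x - df y) \<le> L * norm (x - y)"
    and bounded: "\<And>x. f_inf \<le> f x \<and> f x \<le> f_sup"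
    and beta1: "0 \<le> beta1" "beta1 < 1"
    and beta2: "0 \<le> beta2" "beta2 < 1"
    and eps: "eps > 0"
    and a: "0 < a1" "a1 \<le> a2"
    and lr: "\<And>t. t \<ge> 1 \<Longrightarrow> a1 / sqrt (real t) \<le> alpha t \<and> alpha t \<le> a2 / sqrt (real t)"
    and G: "G > 0"
    and g_meas: "\<And>t. g t \<in> borel_measurable M"
    and g_moment: "\<And>t. (\<integral>\<^sup>+ x. ennreal ((norm (g t x))\<^sup>2) \<partial>M) \<le> ennreal (G\<^sup>2)"
    and g_unbiased: "\<And>t i. t \<ge> 1 \<Longrightarrow>
        AE x in M. real_cond_exp M (gen_filtration M g t) (\<lambda>y. g t y $ i) x
          = df (adopt_theta beta1 beta2 eps alpha theta0 (\<lambda>s. g s x) (t - 1)) $ i"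
begin

definition "th n x = fst (adopt_state beta1 beta2 eps alpha theta0 (\<lambda>s. g s x) n)"
definition "vv n x = fst (snd (adopt_state beta1 beta2 eps alpha theta0 (\<lambda>s. g s x) n))"
definition "mm n x = snd (snd (adopt_state beta1 beta2 eps alpha theta0 (\<lambda>s. g s x) n))"
definition "dd n x = emax_sqrt_div eps (g (Suc n) x) (vv n x)"

lemma th_0: "th 0 x = theta0" by (simp add: th_def st_0)
lemma vv_0: "vv 0 x = (\<chi> i. g 0 x $ i * g 0 x $ i)" by (simp add: vv_def st_0)
lemma mm_0: "mm 0 x = dd 0 x" by (simp add: mm_def dd_def vv_def st_0)
lemma th_Suc: "th (Suc n) x = th n x - alpha (Suc n) *\<^sub>R mm n x"
  by (simp add: th_def mm_def st_Suc Let_def)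
lemma vv_Suc: "vv (Suc n) x = (\<chi> i. beta2 * vv n x $ i + (1 - beta2) * (g (Suc n) x $ i * g (Suc n) x $ i))"
  by (simp add: vv_def st_Suc Let_def)
lemma mm_Suc: "mm (Suc n) x = beta1 *\<^sub>R mm n x + (1 - beta1) *\<^sub>R dd (Suc n) x"
  by (simp add: mm_def dd_def vv_def st_Suc Let_def)

lemma th_adopt: "adopt_theta beta1 beta2 eps alpha theta0 (\<lambda>s. g s x) n = th n x"
  by (simp add: adopt_theta_def th_def)

lemma meas_M[measurable]: "th n \<in> borel_measurable M" "vv n \<in> borel_measurable M" "mm n \<in> borel_measurable M"
  using st_meas[of n g M beta1 beta2 eps alpha theta0] g_meas unfolding th_def vv_def mm_def by auto

lemma dd_meas[measurable]: "dd n \<in> borel_measurable M"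
  unfolding dd_def by (rule emax_meas) (auto intro: g_meas)

lemma meas_F: "th n \<in> borel_measurable (gen_filtration M g (Suc n))"
  "vv n \<in> borel_measurable (gen_filtration M g (Suc n))"
proof -
  define g' where "g' s x = (if s \<le> n then g s x else 0)" for s x
  have gm: "g' i \<in> borel_measurable (gen_filtration M g (Suc n))" for i
  proof (cases "i \<le> n")
    case True
    then have "g' i = g i" by (simp add: g'_def fun_eq_iff)
    then show ?thesis using True gf_meas[of i "Suc n" g M] by simp
  next
    case False
    then have "g' i = (\<lambda>x. 0)" by (simp add: g'_def fun_eq_iff)
    then show ?thesis by simp
  qed
  have eq: "th n x = fst (adopt_state beta1 beta2 eps alpha theta0 (\<lambda>s. g' s x) n)
         \<and> vv n x = fst (snd (adopt_state beta1 beta2 eps alpha theta0 (\<lambda>s. g' s x) n))" for x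
    unfolding th_def vv_def by (intro st_dep_tv) (simp add: g'_def)
  have "(\<lambda>x. fst (adopt_state beta1 beta2 eps alpha theta0 (\<lambda>s. g' s x) n)) \<in> borel_measurable (gen_filtration M g (Suc n))
    \<and> (\<lambda>x. fst (snd (adopt_state beta1 beta2 eps alpha theta0 (\<lambda>s. g' s x) n))) \<in> borel_measurable (gen_filtration M g (Suc n))" (is "?A \<and> ?B")
    using st_meas[of n g' "gen_filtration M g (Suc n)" beta1 beta2 eps alpha theta0] gm by auto
  then show "th n \<in> borel_measurable (gen_filtration M g (Suc n))"
    "vv n \<in> borel_measurable (gen_filtration M g (Suc n))"
  proof -
    have "th n = (\<lambda>x. fst (adopt_state beta1 beta2 eps alpha theta0 (\<lambda>s. g' s x) n))"
      "vv n = (\<lambda>x. fst (snd (adopt_state beta1 beta2 eps alpha theta0 (\<lambda>s. g' s x) n)))"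
      using eq by auto
    then show "th n \<in> borel_measurable (gen_filtration M g (Suc n))"
    "vv n \<in> borel_measurable (gen_filtration M g (Suc n))" using \<open>?A \<and> ?B\<close> by simp_all
  qed
qed

lemma df_cont: "continuous_on UNIV df"
proof (rule lipschitz_on_continuous_on)
  show "L-lipschitz_on UNIV df" unfolding lipschitz_on_def
    using L_pos smooth by (auto simp: dist_norm)
qed

lemma df_meas[measurable]: "df \<in> borel_measurable borel"
  by (rule borel_measurable_continuous_onI[OF df_cont])

lemma f_meas[measurable]: "f \<in> borel_measurable borel"
proof (rule borel_measurable_continuous_onI, rule continuous_at_imp_continuous_on, intro ballI)
  fix x show "isCont f x" using grad[of x] unfolding gderiv_def by (rule has_derivative_continuous)
qed

definition "B = sqrt (2 * L * (f_sup - f_inf))"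

lemma df_bound: "norm (df x) \<le> B"
proof -
  have "f (x - (1/L) *\<^sub>R df x) \<le> f x + df x \<bullet> ((x - (1/L) *\<^sub>R df x) - x) + L / 2 * (norm ((x - (1/L) *\<^sub>R df x) - x))\<^sup>2"
    by (rule descent[OF grad smooth])
  also have "\<dots> = f x - (norm (df x))\<^sup>2 / (2 * L)"
  proof -
    have "df x \<bullet> df x = (norm (df x))\<^sup>2" by (simp add: power2_norm_eq_inner)
    then show ?thesis using L_pos by (simp add: inner_diff_right power2_eq_square field_simps)
  qed
  finally have "(norm (df x))\<^sup>2 \<le> 2 * L * (f x - f (x - (1/L) *\<^sub>R df x))"
    using L_pos by (simp add: field_simps)
  also have "\<dots> \<le> 2 * L * (f_sup - f_inf)"
    using L_pos bounded[of x] bounded[of "x - (1/L) *\<^sub>R df x"] by (intro mult_left_mono) auto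
  finally show ?thesis unfolding B_def by (rule real_le_rsqrt)
qed

lemma alpha_pos: "t \<ge> 1 \<Longrightarrow> alpha t > 0"
proof -
  assume t: "t \<ge> 1"
  have "0 < a1 / sqrt (real t)" using a t by simp
  then show ?thesis using lr[OF t] by linarith
qed

end

lemma conv_sq:
  fixes a b :: "'v::real_normed_vector"
  assumes "0 \<le> c" "c \<le> 1"
  shows "(norm (c *\<^sub>R a + (1 - c) *\<^sub>R b))\<^sup>2 \<le> c * (norm a)\<^sup>2 + (1 - c) * (norm b)\<^sup>2"
proof -
  have "norm (c *\<^sub>R a + (1 - c) *\<^sub>R b) \<le> c * norm a + (1 - c) * norm b"
    using assms by (metis (no_types, opaque_lifting) abs_of_nonneg diff_ge_0_iff_ge norm_scaleR norm_triangle_ineq)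
  then have "(norm (c *\<^sub>R a + (1 - c) *\<^sub>R b))\<^sup>2 \<le> (c * norm a + (1 - c) * norm b)\<^sup>2"
    by (intro power_mono) auto
  also have "\<dots> = c * (norm a)\<^sup>2 + (1 - c) * (norm b)\<^sup>2 - c * (1 - c) * (norm a - norm b)\<^sup>2"
    by (simp add: power2_eq_square algebra_simps)
  also have "\<dots> \<le> c * (norm a)\<^sup>2 + (1 - c) * (norm b)\<^sup>2"
    using assms by simp
  finally show ?thesis .
qed

context adopt_loc begin

lemma gsq_int: "integrable M (\<lambda>x. (norm (g t x))\<^sup>2)"
proof (rule integrableI_bounded)
  show "(\<lambda>x. (norm (g t x))\<^sup>2) \<in> borel_measurable M" using g_meas[of t] by measurable
  have "(\<integral>\<^sup>+ x. ennreal (norm ((norm (g t x))\<^sup>2)) \<partial>M) = (\<integral>\<^sup>+ x. ennreal ((norm (g t x))\<^sup>2) \<partial>M)" by simp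
  also have "\<dots> \<le> ennreal (G\<^sup>2)" by (rule g_moment)
  also have "\<dots> < \<infinity>" by simp
  finally show "(\<integral>\<^sup>+ x. ennreal (norm ((norm (g t x))\<^sup>2)) \<partial>M) < \<infinity>" .
qed

lemma gsq_E: "(\<integral>x. (norm (g t x))\<^sup>2 \<partial>M) \<le> G\<^sup>2"
proof -
  have "ennreal (\<integral>x. (norm (g t x))\<^sup>2 \<partial>M) = (\<integral>\<^sup>+ x. ennreal ((norm (g t x))\<^sup>2) \<partial>M)"
    by (rule nn_integral_eq_integral[OF gsq_int, symmetric]) auto
  also have "\<dots> \<le> ennreal (G\<^sup>2)" by (rule g_moment)
  finally show ?thesis by (simp add: ennreal_le_iff)
qed

lemma norm_le_sq1: "norm (x::real^'d) \<le> 1 + (norm x)\<^sup>2"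
proof -
  have "0 \<le> (norm x - 1)\<^sup>2" by simp
  then have "2 * norm x \<le> (norm x)\<^sup>2 + 1" by (simp add: power2_eq_square algebra_simps)
  moreover have "0 \<le> (norm x)\<^sup>2" by simp
  ultimately show ?thesis by linarith
qed

lemma g_int: "integrable M (g t)"
proof (rule Bochner_Integration.integrable_bound)
  show "integrable M (\<lambda>x. 1 + (norm (g t x))\<^sup>2)" using gsq_int by (intro Bochner_Integration.integrable_add) auto
  show "g t \<in> borel_measurable M" by (rule g_meas)
  show "AE x in M. norm (g t x) \<le> norm (1 + (norm (g t x))\<^sup>2)"
    using norm_le_sq1 by (auto intro!: AE_I2 simp del: real_norm_def) (smt (verit) real_norm_def norm_ge_zero zero_le_power2)
qed

lemma gi_int: "integrable M (\<lambda>x. g t x $ i)"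
proof (rule Bochner_Integration.integrable_bound[OF g_int])
  show "(\<lambda>x. g t x $ i) \<in> borel_measurable M" using g_meas[of t] by measurable
  show "AE x in M. norm (g t x $ i) \<le> norm (g t x)" by (auto intro!: component_le_norm_cart)
qed

lemma dd_norm: "norm (dd n x) \<le> norm (g (Suc n) x) / eps"
proof -
  have "norm (dd n x) \<le> norm ((1/eps) *\<^sub>R g (Suc n) x)"
  proof (rule norm_le_componentwise_cart)
    fix i
    have "max (sqrt (vv n x $ i)) eps \<ge> eps" by simp
    then have "\<bar>g (Suc n) x $ i\<bar> / max (sqrt (vv n x $ i)) eps \<le> \<bar>g (Suc n) x $ i\<bar> / eps"
      using eps by (intro divide_left_mono) auto
    then show "norm (dd n x $ i) \<le> norm (((1/eps) *\<^sub>R g (Suc n) x) $ i)"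
      using eps by (simp add: dd_def emax_sqrt_div_def abs_div)
  qed
  then show ?thesis using eps by simp
qed

definition "M2 = G\<^sup>2 / eps\<^sup>2"

lemma dd_sq: "(norm (dd n x))\<^sup>2 \<le> (norm (g (Suc n) x))\<^sup>2 / eps\<^sup>2"
proof -
  have "(norm (dd n x))\<^sup>2 \<le> (norm (g (Suc n) x) / eps)\<^sup>2"
    using dd_norm by (intro power_mono) auto
  then show ?thesis by (simp add: power_divide)
qed

lemma dd_sq_int: "integrable M (\<lambda>x. (norm (dd n x))\<^sup>2)"
proof (rule Bochner_Integration.integrable_bound)
  show "integrable M (\<lambda>x. (norm (g (Suc n) x))\<^sup>2 / eps\<^sup>2)" using gsq_int by simp
  show "(\<lambda>x. (norm (dd n x))\<^sup>2) \<in> borel_measurable M" by measurable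
  show "AE x in M. norm ((norm (dd n x))\<^sup>2) \<le> norm ((norm (g (Suc n) x))\<^sup>2 / eps\<^sup>2)"
    using dd_sq by (auto intro!: AE_I2)
qed

lemma dd_sq_E: "(\<integral>x. (norm (dd n x))\<^sup>2 \<partial>M) \<le> M2"
proof -
  have "(\<integral>x. (norm (dd n x))\<^sup>2 \<partial>M) \<le> (\<integral>x. (norm (g (Suc n) x))\<^sup>2 / eps\<^sup>2 \<partial>M)"
    by (intro integral_mono dd_sq_int dd_sq) (auto intro!: gsq_int)
  also have "\<dots> = (\<integral>x. (norm (g (Suc n) x))\<^sup>2 \<partial>M) / eps\<^sup>2" by simp
  also have "\<dots> \<le> G\<^sup>2 / eps\<^sup>2" using gsq_E by (intro divide_right_mono) auto
  finally show ?thesis unfolding M2_def .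
qed

lemma mm_sq_Suc: "(norm (mm (Suc n) x))\<^sup>2 \<le> beta1 * (norm (mm n x))\<^sup>2 + (1 - beta1) * (norm (dd (Suc n) x))\<^sup>2"
  unfolding mm_Suc using beta1 by (intro conv_sq) auto

lemma mm_sq_dom: "(norm (mm n x))\<^sup>2 \<le> (\<Sum>k\<le>n. (norm (dd k x))\<^sup>2)"
proof (induction n)
  case 0 then show ?case by (simp add: mm_0)
next
  case (Suc n)
  have "(norm (mm (Suc n) x))\<^sup>2 \<le> beta1 * (norm (mm n x))\<^sup>2 + (1 - beta1) * (norm (dd (Suc n) x))\<^sup>2"
    by (rule mm_sq_Suc)
  also have "\<dots> \<le> (norm (mm n x))\<^sup>2 + (norm (dd (Suc n) x))\<^sup>2"
    using beta1 by (intro add_mono) (auto intro!: mult_left_le_one_le)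
  finally show ?case using Suc.IH by simp
qed

lemma mm_sq_int: "integrable M (\<lambda>x. (norm (mm n x))\<^sup>2)"
proof (rule Bochner_Integration.integrable_bound)
  show "integrable M (\<lambda>x. (\<Sum>k\<le>n. (norm (dd k x))\<^sup>2))" using dd_sq_int by auto
  show "(\<lambda>x. (norm (mm n x))\<^sup>2) \<in> borel_measurable M" by measurable
  show "AE x in M. norm ((norm (mm n x))\<^sup>2) \<le> norm (\<Sum>k\<le>n. (norm (dd k x))\<^sup>2)"
    using mm_sq_dom by (auto intro!: AE_I2 simp: sum_nonneg)
qed

lemma mm_sq_E: "(\<integral>x. (norm (mm n x))\<^sup>2 \<partial>M) \<le> M2"
proof (induction n)
  case 0 then show ?case using dd_sq_E[of 0] by (simp add: mm_0)
next
  case (Suc n)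
  have "(\<integral>x. (norm (mm (Suc n) x))\<^sup>2 \<partial>M) \<le> (\<integral>x. beta1 * (norm (mm n x))\<^sup>2 + (1 - beta1) * (norm (dd (Suc n) x))\<^sup>2 \<partial>M)"
    by (intro integral_mono mm_sq_int mm_sq_Suc) (auto intro!: mm_sq_int dd_sq_int)
  also have "\<dots> = beta1 * (\<integral>x. (norm (mm n x))\<^sup>2 \<partial>M) + (1 - beta1) * (\<integral>x. (norm (dd (Suc n) x))\<^sup>2 \<partial>M)"
    by (simp add: mm_sq_int dd_sq_int)
  also have "\<dots> \<le> beta1 * M2 + (1 - beta1) * M2"
    using beta1 Suc.IH dd_sq_E[of "Suc n"] by (intro add_mono mult_left_mono) auto
  finally show ?case by (simp add: algebra_simps)
qed

end

lemma sum_sq_norm: "(\<Sum>i\<in>UNIV. (x::real^'d) $ i * x $ i) = (norm x)\<^sup>2"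
  by (simp add: power2_norm_eq_inner inner_vec_def)

context adopt_loc begin

definition "V n x = (\<Sum>i\<in>UNIV. vv n x $ i)"

lemma V_meas[measurable]: "V n \<in> borel_measurable M"
  unfolding V_def by measurable

lemma vv_nonneg: "vv n x $ i \<ge> 0"
proof (induction n)
  case 0 then show ?case by (simp add: vv_0)
next
  case (Suc n) then show ?case using beta2 by (simp add: vv_Suc)
qed

lemma V_nonneg: "V n x \<ge> 0"
  unfolding V_def by (simp add: sum_nonneg vv_nonneg)

lemma vv_le_V: "vv n x $ i \<le> V n x"
  unfolding V_def by (rule member_le_sum) (auto simp: vv_nonneg)

lemma V_0: "V 0 x = (norm (g 0 x))\<^sup>2"
  by (simp add: V_def vv_0 sum_sq_norm)

lemma V_Suc: "V (Suc n) x = beta2 * V n x + (1 - beta2) * (norm (g (Suc n) x))\<^sup>2"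
  by (simp add: V_def vv_Suc sum.distrib sum_distrib_left sum_sq_norm[symmetric])

lemma V_dom: "V n x \<le> (\<Sum>k\<le>n. (norm (g k x))\<^sup>2)"
proof (induction n)
  case 0 then show ?case by (simp add: V_0)
next
  case (Suc n)
  have "V (Suc n) x \<le> V n x + (norm (g (Suc n) x))\<^sup>2"
    unfolding V_Suc using beta2 V_nonneg[of n x]
    by (intro add_mono) (auto intro!: mult_left_le_one_le)
  then show ?case using Suc.IH by simp
qed

lemma V_int: "integrable M (V n)"
proof (rule Bochner_Integration.integrable_bound)
  show "integrable M (\<lambda>x. (\<Sum>k\<le>n. (norm (g k x))\<^sup>2))" using gsq_int by auto
  show "V n \<in> borel_measurable M" by measurable
  show "AE x in M. norm (V n x) \<le> norm (\<Sum>k\<le>n. (norm (g k x))\<^sup>2)"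
    using V_dom V_nonneg by (auto intro!: AE_I2 simp: sum_nonneg)
qed

lemma V_E: "(\<integral>x. V n x \<partial>M) \<le> G\<^sup>2"
proof (induction n)
  case 0 then show ?case using gsq_E[of 0] by (simp add: V_0)
next
  case (Suc n)
  have "(\<integral>x. V (Suc n) x \<partial>M) = beta2 * (\<integral>x. V n x \<partial>M) + (1 - beta2) * (\<integral>x. (norm (g (Suc n) x))\<^sup>2 \<partial>M)"
    unfolding V_Suc by (simp add: V_int gsq_int)
  also have "\<dots> \<le> beta2 * G\<^sup>2 + (1 - beta2) * G\<^sup>2"
    using beta2 Suc.IH gsq_E[of "Suc n"] by (intro add_mono mult_left_mono) auto
  finally show ?case by (simp add: algebra_simps)
qed

definition "P n x = df (th n x) \<bullet> mm n x"
definition "Q n x = df (th n x) \<bullet> dd n x"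

lemma P_meas[measurable]: "P n \<in> borel_measurable M" unfolding P_def by measurable
lemma Q_meas[measurable]: "Q n \<in> borel_measurable M" unfolding Q_def by measurable

lemma B_nonneg: "0 \<le> B"
  using df_bound[of 0] norm_ge_zero[of "df 0"] by linarith

lemma inner_bound: "\<bar>df y \<bullet> (z::real^'d)\<bar> \<le> B * (1 + (norm z)\<^sup>2)"
proof -
  have "\<bar>df y \<bullet> z\<bar> \<le> norm (df y) * norm z" by (rule Cauchy_Schwarz_ineq2)
  also have "\<dots> \<le> B * (1 + (norm z)\<^sup>2)"
    using df_bound[of y] norm_le_sq1[of z] B_nonneg by (intro mult_mono) auto
  finally show ?thesis .
qed

lemma P_int: "integrable M (P n)"
proof (rule Bochner_Integration.integrable_bound)
  show "integrable M (\<lambda>x. B * (1 + (norm (mm n x))\<^sup>2))" using mm_sq_int by auto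
  show "P n \<in> borel_measurable M" by measurable
  note B_nonneg
  then show "AE x in M. norm (P n x) \<le> norm (B * (1 + (norm (mm n x))\<^sup>2))"
    using inner_bound by (auto intro!: AE_I2 simp: P_def)
qed

lemma Q_int: "integrable M (Q n)"
proof (rule Bochner_Integration.integrable_bound)
  show "integrable M (\<lambda>x. B * (1 + (norm (dd n x))\<^sup>2))" using dd_sq_int by auto
  show "Q n \<in> borel_measurable M" by measurable
  note B_nonneg
  then show "AE x in M. norm (Q n x) \<le> norm (B * (1 + (norm (dd n x))\<^sup>2))"
    using inner_bound by (auto intro!: AE_I2 simp: Q_def)
qed

lemma p_bound: "\<bar>\<integral>x. P n x \<partial>M\<bar> \<le> B * (1 + M2)"
proof -
  have "\<bar>\<integral>x. P n x \<partial>M\<bar> \<le> (\<integral>x. \<bar>P n x\<bar> \<partial>M)" by (rule integral_abs_bound)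
  also have "\<dots> \<le> (\<integral>x. B * (1 + (norm (mm n x))\<^sup>2) \<partial>M)"
  proof (rule integral_mono)
    show "integrable M (\<lambda>x. \<bar>P n x\<bar>)" using P_int by auto
    show "integrable M (\<lambda>x. B * (1 + (norm (mm n x))\<^sup>2))" using mm_sq_int by auto
    show "\<bar>P n x\<bar> \<le> B * (1 + (norm (mm n x))\<^sup>2)" for x unfolding P_def by (rule inner_bound)
  qed
  also have "\<dots> = B * (1 + (\<integral>x. (norm (mm n x))\<^sup>2 \<partial>M))"
    using mm_sq_int by (simp add: prob_space)
  also have "\<dots> \<le> B * (1 + M2)"
    using mm_sq_E B_nonneg by (intro mult_left_mono) auto
  finally show ?thesis .
qed

end

context adopt_loc begin

definition "hh n i x = df (th n x) $ i / max (sqrt (vv n x $ i)) eps"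
definition "R n x = (\<Sum>i\<in>UNIV. hh n i x * df (th n x) $ i)"

lemma hh_bound: "\<bar>hh n i x\<bar> \<le> B / eps"
proof -
  have "\<bar>df (th n x) $ i\<bar> \<le> B" using component_le_norm_cart df_bound order_trans by blast
  moreover have "max (sqrt (vv n x $ i)) eps \<ge> eps" by simp
  moreover have "0 < max (sqrt (vv n x $ i)) eps" using eps by simp
  ultimately have "\<bar>df (th n x) $ i\<bar> / \<bar>max (sqrt (vv n x $ i)) eps\<bar> \<le> B / eps"
    using eps B_nonneg by (intro frac_le) auto
  then show ?thesis unfolding hh_def by (simp add: abs_div)
qed

lemma hh_meas[measurable]: "hh n i \<in> borel_measurable M"
  unfolding hh_def by measurable

lemma Q_sum: "Q n x = (\<Sum>i\<in>UNIV. hh n i x * g (Suc n) x $ i)"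
  by (simp add: Q_def inner_vec_def dd_def emax_sqrt_div_def hh_def)

lemma hg_int: "integrable M (\<lambda>x. hh n i x * g (Suc n) x $ i)"
proof (rule Bochner_Integration.integrable_bound)
  show "integrable M (\<lambda>x. B / eps * g (Suc n) x $ i)" using gi_int by auto
  show "(\<lambda>x. hh n i x * g (Suc n) x $ i) \<in> borel_measurable M" using g_meas[of "Suc n"] by measurable
  show "AE x in M. norm (hh n i x * g (Suc n) x $ i) \<le> norm (B / eps * g (Suc n) x $ i)"
  proof (intro AE_I2)
    fix x
    have "\<bar>hh n i x\<bar> * \<bar>g (Suc n) x $ i\<bar> \<le> B / eps * \<bar>g (Suc n) x $ i\<bar>"
      by (intro mult_right_mono hh_bound) auto
    then show "norm (hh n i x * g (Suc n) x $ i) \<le> norm (B / eps * g (Suc n) x $ i)"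
      using eps B_nonneg by (simp add: abs_mult)
  qed
qed

lemma hdf_int: "integrable M (\<lambda>x. hh n i x * df (th n x) $ i)"
proof (rule finite_measure.integrable_const_bound[where B="B / eps * B"])
  show "finite_measure M" by (rule finite_measure_axioms)
  show "(\<lambda>x. hh n i x * df (th n x) $ i) \<in> borel_measurable M" by measurable
  show "AE x in M. norm (hh n i x * df (th n x) $ i) \<le> B / eps * B"
  proof (intro AE_I2)
    fix x
    have "\<bar>df (th n x) $ i\<bar> \<le> B" using component_le_norm_cart df_bound order_trans by blast
    then show "norm (hh n i x * df (th n x) $ i) \<le> B / eps * B"
    proof -
      have "\<bar>hh n i x\<bar> * \<bar>df (th n x) $ i\<bar> \<le> B / eps * B"
        using hh_bound[of n i x] \<open>\<bar>df (th n x) $ i\<bar> \<le> B\<close> eps B_nonneg by (intro mult_mono) auto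
      then show ?thesis by (simp add: abs_mult)
    qed
  qed
qed

lemma hg_E: "(\<integral>x. hh n i x * g (Suc n) x $ i \<partial>M) = (\<integral>x. hh n i x * df (th n x) $ i \<partial>M)"
proof -
  define F where "F = gen_filtration M g (Suc n)"
  have "finite_measure_subalgebra M F"
    unfolding finite_measure_subalgebra_def finite_measure_subalgebra_axioms_def F_def
    using finite_measure_axioms gf_sub g_meas by blast
  then interpret sfs: sigma_finite_subalgebra M F by (rule finite_measure_subalgebra_is_sigma_finite)
  have [measurable]: "th n \<in> borel_measurable F" "vv n \<in> borel_measurable F" using meas_F unfolding F_def by auto
  have hF: "hh n i \<in> borel_measurable F" unfolding hh_def by measurable
  have gi[measurable]: "(\<lambda>y. g (Suc n) y $ i) \<in> borel_measurable M" using g_meas[of "Suc n"] by measurable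
  have "(\<integral>x. hh n i x * g (Suc n) x $ i \<partial>M) = (\<integral>x. hh n i x * real_cond_exp M F (\<lambda>y. g (Suc n) y $ i) x \<partial>M)"
    using sfs.real_cond_exp_intg(2)[OF hg_int hF gi] by simp
  also have "\<dots> = (\<integral>x. hh n i x * df (th n x) $ i \<partial>M)"
  proof (rule integral_cong_AE)
    show "(\<lambda>x. hh n i x * real_cond_exp M F (\<lambda>y. g (Suc n) y $ i) x) \<in> borel_measurable M" by measurable
    show "(\<lambda>x. hh n i x * df (th n x) $ i) \<in> borel_measurable M" by measurable
    show "AE x in M. hh n i x * real_cond_exp M F (\<lambda>y. g (Suc n) y $ i) x = hh n i x * df (th n x) $ i"
      using g_unbiased[of "Suc n" i] unfolding F_def by (auto simp: th_adopt)
  qed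
  finally show ?thesis .
qed

lemma R_int: "integrable M (R n)"
  unfolding R_def using hdf_int by auto

lemma Q_E: "(\<integral>x. Q n x \<partial>M) = (\<integral>x. R n x \<partial>M)"
  unfolding Q_sum R_def
  by (simp add: Bochner_Integration.integral_sum[OF hg_int] Bochner_Integration.integral_sum[OF hdf_int] hg_E)

lemma R_nonneg: "R n x \<ge> 0"
  unfolding R_def
proof (intro sum_nonneg)
  fix i
  have "hh n i x * df (th n x) $ i = (df (th n x) $ i)\<^sup>2 / max (sqrt (vv n x $ i)) eps"
    by (simp add: hh_def power2_eq_square)
  moreover have "0 < max (sqrt (vv n x $ i)) eps" using eps by simp
  ultimately show "0 \<le> hh n i x * df (th n x) $ i" by simp
qed

end

lemma young_pt:
  fixes X s l :: real
  assumes "X \<ge> 0" "s > 0" "l > 0"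
  shows "X powr (4/3) \<le> 2/3 * (l * X\<^sup>2 / s) + 1/3 * (s\<^sup>2 / l\<^sup>2)"
proof (cases "X = 0")
  case True then show ?thesis using assms by simp
next
  case False
  then have X: "X > 0" using assms by simp
  define a where "a = l * X\<^sup>2 / s"
  define b where "b = s\<^sup>2 / l\<^sup>2"
  have a: "a > 0" and b: "b > 0" using X assms by (auto simp: a_def b_def)
  have "a powr (2/3) = (a powr 2) powr (1/3)" by (simp add: powr_powr)
  also have "\<dots> = (a\<^sup>2) powr (1/3)" using a by (simp add: powr_numeral)
  finally have e1: "a powr (2/3) = (a\<^sup>2) powr (1/3)" .
  have "a powr (2/3) * b powr (1/3) = (a\<^sup>2 * b) powr (1/3)"
    using a b by (simp add: e1 powr_mult)
  also have "a\<^sup>2 * b = X ^ 4" using assms unfolding a_def b_def by (simp add: field_simps power2_eq_square power4_eq_xxxx)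
  also have "(X ^ 4) powr (1/3) = (X powr 4) powr (1/3)" using X by (simp add: powr_numeral)
  also have "\<dots> = X powr (4/3)" by (simp add: powr_powr)
  finally have "X powr (4/3) = a powr (2/3) * b powr (1/3)" by simp
  also have "\<dots> \<le> 2/3 * a + 1/3 * b" using a b by (intro Youngs_inequality_0) auto
  finally show ?thesis unfolding a_def b_def .
qed

lemma sq_sum_div: "(norm (v::real^'d))\<^sup>2 / c = (\<Sum>i\<in>UNIV. (v $ i)\<^sup>2 / c)"
proof -
  have "(norm v)\<^sup>2 = (\<Sum>i\<in>UNIV. v $ i * v $ i)" by (rule sum_sq_norm[symmetric])
  then have "(norm v)\<^sup>2 / c = (\<Sum>i\<in>UNIV. v $ i * v $ i) / c" by simp
  also have "\<dots> = (\<Sum>i\<in>UNIV. v $ i * v $ i / c)" by (rule sum_divide_distrib)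
  finally show ?thesis by (simp add: power2_eq_square)
qed

context adopt_loc begin

lemma R_lower: "(norm (df (th n x)))\<^sup>2 / sqrt (V n x + eps\<^sup>2) \<le> R n x"
proof -
  define s where "s = sqrt (V n x + eps\<^sup>2)"
  have s: "s > 0" using eps V_nonneg[of n x] by (simp add: s_def add_nonneg_pos)
  have "(norm (df (th n x)))\<^sup>2 / s = (\<Sum>i\<in>UNIV. (df (th n x) $ i)\<^sup>2 / s)"
    by (rule sq_sum_div)
  also have "\<dots> \<le> (\<Sum>i\<in>UNIV. hh n i x * df (th n x) $ i)"
  proof (rule sum_mono)
    fix i
    have m: "max (sqrt (vv n x $ i)) eps \<le> s"
    proof -
      have "sqrt (vv n x $ i) \<le> s" unfolding s_def using vv_le_V[of n x i] by (simp add: add_increasing2)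
      moreover have "eps \<le> s"
      proof -
        have "sqrt (eps\<^sup>2) \<le> sqrt (V n x + eps\<^sup>2)" using V_nonneg[of n x] by (intro real_sqrt_le_mono) simp
        then show ?thesis unfolding s_def using eps by simp
      qed
      ultimately show ?thesis by simp
    qed
    have "hh n i x * df (th n x) $ i = (df (th n x) $ i)\<^sup>2 / max (sqrt (vv n x $ i)) eps"
      by (simp add: hh_def power2_eq_square)
    moreover have "(df (th n x) $ i)\<^sup>2 / s \<le> (df (th n x) $ i)\<^sup>2 / max (sqrt (vv n x $ i)) eps"
      using m eps by (intro divide_left_mono) auto
    ultimately show "(df (th n x) $ i)\<^sup>2 / s \<le> hh n i x * df (th n x) $ i" by simp
  qed
  finally show ?thesis unfolding R_def s_def .
qed

lemma R_upper: "R n x \<le> B\<^sup>2 / eps"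
proof -
  have "R n x \<le> (\<Sum>i\<in>UNIV. (df (th n x) $ i)\<^sup>2 / eps)"
    unfolding R_def
  proof (rule sum_mono)
    fix i
    have "hh n i x * df (th n x) $ i = (df (th n x) $ i)\<^sup>2 / max (sqrt (vv n x $ i)) eps"
      by (simp add: hh_def power2_eq_square)
    moreover have "(df (th n x) $ i)\<^sup>2 / max (sqrt (vv n x $ i)) eps \<le> (df (th n x) $ i)\<^sup>2 / eps"
      using eps by (intro divide_left_mono) auto
    ultimately show "hh n i x * df (th n x) $ i \<le> (df (th n x) $ i)\<^sup>2 / eps" by simp
  qed
  also have "\<dots> = (norm (df (th n x)))\<^sup>2 / eps"
    by (rule sq_sum_div[symmetric])
  also have "\<dots> \<le> B\<^sup>2 / eps"
    using df_bound[of "th n x"] eps by (intro divide_right_mono power_mono) auto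
  finally show ?thesis .
qed

lemma R_E_upper: "(\<integral>x. R n x \<partial>M) \<le> B\<^sup>2 / eps"
proof -
  have "(\<integral>x. R n x \<partial>M) \<le> (\<integral>x. B\<^sup>2 / eps \<partial>M)"
    by (intro integral_mono R_int R_upper) auto
  then show ?thesis by (simp add: prob_space)
qed

lemma X43_int: "integrable M (\<lambda>x. norm (df (th n x)) powr (4/3))"
proof (rule finite_measure.integrable_const_bound[where B="B powr (4/3)"])
  show "finite_measure M" by (rule finite_measure_axioms)
  show "(\<lambda>x. norm (df (th n x)) powr (4/3)) \<in> borel_measurable M" by measurable
  show "AE x in M. norm (norm (df (th n x)) powr (4/3)) \<le> B powr (4/3)"
    using df_bound by (auto intro!: AE_I2 powr_mono2)
qed

lemma holder_E:
  assumes l: "l > 0"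
  shows "(\<integral>x. norm (df (th n x)) powr (4/3) \<partial>M) \<le> 2/3 * l * (\<integral>x. R n x \<partial>M) + (G\<^sup>2 + eps\<^sup>2) / (3 * l\<^sup>2)"
proof -
  have pt: "norm (df (th n x)) powr (4/3) \<le> 2/3 * l * R n x + 1/3 * ((V n x + eps\<^sup>2) / l\<^sup>2)" for x
  proof -
    define s where "s = sqrt (V n x + eps\<^sup>2)"
    have s: "s > 0" using eps V_nonneg[of n x] by (simp add: s_def add_nonneg_pos)
    have ss: "s\<^sup>2 = V n x + eps\<^sup>2" unfolding s_def using V_nonneg[of n x] by simp
    have "norm (df (th n x)) powr (4/3) \<le> 2/3 * (l * (norm (df (th n x)))\<^sup>2 / s) + 1/3 * (s\<^sup>2 / l\<^sup>2)"
      using s l by (intro young_pt) auto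
    also have "l * (norm (df (th n x)))\<^sup>2 / s \<le> l * R n x"
      using R_lower[of n x] l unfolding s_def by (simp add: mult_left_mono times_divide_eq_right[symmetric] del: times_divide_eq_right)
    finally show ?thesis unfolding ss by simp
  qed
  have "(\<integral>x. norm (df (th n x)) powr (4/3) \<partial>M) \<le> (\<integral>x. 2/3 * l * R n x + 1/3 * ((V n x + eps\<^sup>2) / l\<^sup>2) \<partial>M)"
  proof (rule integral_mono[OF X43_int _ pt])
    show "integrable M (\<lambda>x. 2/3 * l * R n x + 1/3 * ((V n x + eps\<^sup>2) / l\<^sup>2))"
    proof -
      have i1: "integrable M (\<lambda>x. 2/3 * l * R n x)" using R_int by (rule Bochner_Integration.integrable_mult_right)
      have "integrable M (\<lambda>x. V n x + eps\<^sup>2)" using V_int integrable_const by (rule Bochner_Integration.integrable_add)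
      then have "integrable M (\<lambda>x. (V n x + eps\<^sup>2) / l\<^sup>2)" by (rule Bochner_Integration.integrable_divide)
      then have i2: "integrable M (\<lambda>x. 1/3 * ((V n x + eps\<^sup>2) / l\<^sup>2))" by (rule Bochner_Integration.integrable_mult_right)
      show ?thesis using i1 i2 by (rule Bochner_Integration.integrable_add)
    qed
  qed
  also have "\<dots> = 2/3 * l * (\<integral>x. R n x \<partial>M) + 1/3 * (((\<integral>x. V n x \<partial>M) + eps\<^sup>2) / l\<^sup>2)"
    using R_int V_int by (simp add: prob_space)
  also have "\<dots> \<le> 2/3 * l * (\<integral>x. R n x \<partial>M) + 1/3 * ((G\<^sup>2 + eps\<^sup>2) / l\<^sup>2)"
    using V_E[of n] l by (intro add_left_mono mult_left_mono divide_right_mono) auto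
  finally show ?thesis by simp
qed

end

lemma geo_sum:
  fixes \<beta> :: real
  assumes "0 \<le> \<beta>" "\<beta> < 1" "A \<le> T"
  shows "(\<Sum>n\<in>{A..<T}. \<beta> ^ (Suc n - A)) \<le> 1 / (1 - \<beta>)"
proof -
  have eq: "(1 - \<beta>) * (\<Sum>n\<in>{A..<T}. \<beta> ^ (Suc n - A)) = \<beta> - \<beta> ^ (Suc T - A)"
    using assms(3)
  proof (induction T rule: dec_induct)
    case base then show ?case by simp
  next
    case (step T)
    have e: "Suc (Suc T) - A = Suc (Suc T - A)" using step.hyps by simp
    have "(\<Sum>n\<in>{A..<Suc T}. \<beta> ^ (Suc n - A)) = (\<Sum>n\<in>{A..<T}. \<beta> ^ (Suc n - A)) + \<beta> ^ (Suc T - A)"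
      using step.hyps by simp
    then have "(1 - \<beta>) * (\<Sum>n\<in>{A..<Suc T}. \<beta> ^ (Suc n - A)) = (1 - \<beta>) * (\<Sum>n\<in>{A..<T}. \<beta> ^ (Suc n - A)) + (1 - \<beta>) * \<beta> ^ (Suc T - A)"
      by (simp only: distrib_left)
    also have "\<dots> = (\<beta> - \<beta> ^ (Suc T - A)) + (1 - \<beta>) * \<beta> ^ (Suc T - A)"
      by (simp only: step.IH)
    also have "\<dots> = \<beta> - \<beta> ^ (Suc (Suc T) - A)" unfolding e by (simp add: algebra_simps)
    finally show ?case .
  qed
  have "\<beta> - \<beta> ^ (Suc T - A) \<le> 1" using assms by (smt (verit) zero_le_power)
  then have "(1 - \<beta>) * (\<Sum>n\<in>{A..<T}. \<beta> ^ (Suc n - A)) \<le> 1" using eq by simp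
  then show ?thesis using assms by (simp add: field_simps)
qed

lemma window:
  fixes p q r F al :: "nat \<Rightarrow> real" and \<beta> PB MB L lo hi aL aU :: real and T :: nat
  assumes b: "0 \<le> \<beta>" "\<beta> < 1"
    and q_nn: "\<And>n. q n \<ge> 0"
    and p_b: "\<And>n. \<bar>p n\<bar> \<le> PB"
    and r_b: "\<And>n. r n \<le> MB"
    and F_b: "\<And>n. lo \<le> F n \<and> F n \<le> hi"
    and desc: "\<And>n. F (Suc n) \<le> F n - al (Suc n) * p n + L / 2 * (al (Suc n))\<^sup>2 * r n"
    and rec: "\<And>n. p (Suc n) \<ge> \<beta> * p n - \<beta> * L * al (Suc n) * r n + (1 - \<beta>) * q (Suc n)"
    and lr: "\<And>t. t \<ge> 1 \<Longrightarrow> aL / sqrt (real t) \<le> al t \<and> al t \<le> aU / sqrt (real t)"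
    and pos: "0 < aL" "0 < L" "0 \<le> MB" "0 \<le> PB"
    and T: "T \<ge> 2"
  shows "\<exists>n\<in>{T div 2..<T}. q n \<le> 2 * ((hi - lo) + L * MB * aU\<^sup>2 + aU * PB / (1 - \<beta>)
            + 2 * \<beta> * L * MB * aU\<^sup>2 / (1 - \<beta>)) / ((1 - \<beta>) * aL) / sqrt (real T)"
proof -
  define A where "A = T div 2"
  define W where "W = {A..<T}"
  define m where "m = T - A"
  define \<rho> where "\<rho> = aU / sqrt (real A)"
  define D where "D = \<beta> * L * \<rho> * MB / (1 - \<beta>)"
  have A1: "A \<ge> 1" using T unfolding A_def by simp
  have AT: "A < T" using T unfolding A_def by simp
  have cardW: "card W = m" unfolding W_def m_def by simp
  have "m \<le> 2 * A" using T unfolding m_def A_def by presburger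
  then have m_le: "real m \<le> 2 * real A" by simp
  have "T \<le> 2 * m" using T unfolding m_def A_def by presburger
  then have m_ge: "real T \<le> 2 * real m" by simp
  have a2pos: "0 < aU" using lr[of 1] pos by simp
  have rho_pos: "\<rho> > 0" using a2pos A1 unfolding \<rho>_def by simp
  have rho_le: "\<rho> \<le> aU" unfolding \<rho>_def using A1 a2pos
    by (simp add: divide_le_eq_1 field_simps)
  have D_nn: "D \<ge> 0" unfolding D_def using b pos rho_pos by simp
  have al_pos: "al t > 0" if "t \<ge> 1" for t
  proof -
    have "0 < aL / sqrt (real t)" using pos that by simp
    then show ?thesis using lr[OF that] by linarith
  qed
  have al_up: "al (Suc n) \<le> \<rho>" if "n + 1 \<ge> A" for n
  proof -
    have "al (Suc n) \<le> aU / sqrt (real (Suc n))" using lr[of "Suc n"] by simp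
    also have "\<dots> \<le> aU / sqrt (real A)" using that A1 a2pos
      by (intro divide_left_mono) auto
    finally show ?thesis unfolding \<rho>_def .
  qed
  have al_lo: "al (Suc n) \<ge> aL / sqrt (real T)" if "n < T" for n
  proof -
    have "aL / sqrt (real T) \<le> aL / sqrt (real (Suc n))" using that pos
      by (intro divide_left_mono) auto
    also have "\<dots> \<le> al (Suc n)" using lr[of "Suc n"] by simp
    finally show ?thesis .
  qed
  have err: "\<beta> * L * al (Suc n) * r n \<le> (1 - \<beta>) * D" if "n + 1 \<ge> A" for n
  proof -
    have "al (Suc n) * r n \<le> \<rho> * MB"
    proof -
      have "al (Suc n) * r n \<le> al (Suc n) * MB" using r_b al_pos[of "Suc n"] by (intro mult_left_mono) auto
      also have "\<dots> \<le> \<rho> * MB" using al_up[OF that] pos by (intro mult_right_mono) auto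
      finally show ?thesis .
    qed
    then have "\<beta> * L * (al (Suc n) * r n) \<le> \<beta> * L * (\<rho> * MB)" using b pos by (intro mult_left_mono) auto
    moreover have "(1 - \<beta>) * D = \<beta> * L * (\<rho> * MB)" unfolding D_def using b by simp
    moreover have "\<beta> * L * al (Suc n) * r n = \<beta> * L * (al (Suc n) * r n)" by simp
    ultimately show ?thesis by linarith
  qed
  have claim1: "p (A - 1 + j) \<ge> - (\<beta> ^ j * PB) - D" for j
  proof (induction j)
    case 0 then show ?case using p_b[of "A - 1"] D_nn by simp
  next
    case (Suc j)
    have "p (Suc (A - 1 + j)) \<ge> \<beta> * p (A - 1 + j) - \<beta> * L * al (Suc (A - 1 + j)) * r (A - 1 + j) + (1 - \<beta>) * q (Suc (A - 1 + j))"
      by (rule rec)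
    moreover have "\<beta> * p (A - 1 + j) \<ge> \<beta> * (- (\<beta> ^ j * PB) - D)" using Suc.IH b by (intro mult_left_mono) auto
    moreover have "\<beta> * L * al (Suc (A - 1 + j)) * r (A - 1 + j) \<le> (1 - \<beta>) * D" using A1 by (intro err) simp
    moreover have "(1 - \<beta>) * q (Suc (A - 1 + j)) \<ge> 0" using b q_nn by simp
    ultimately have "p (Suc (A - 1 + j)) \<ge> - (\<beta> ^ Suc j * PB) - D" by (simp add: algebra_simps)
    then show ?case by simp
  qed
  have claim2: "p n \<ge> (1 - \<beta>) * q n - \<beta> ^ (Suc n - A) * PB - D" if "n \<in> W" for n
  proof -
    have "n \<ge> 1" using that A1 unfolding W_def by auto
    then obtain k where k: "n = Suc k" by (cases n) auto
    define j where "j = k - (A - 1)"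
    have kj: "k = A - 1 + j" using that k A1 unfolding W_def j_def by auto
    have "p n \<ge> \<beta> * p k - \<beta> * L * al (Suc k) * r k + (1 - \<beta>) * q n"
      using rec[of k] k by simp
    moreover have "\<beta> * p k \<ge> \<beta> * (- (\<beta> ^ j * PB) - D)" using claim1[of j] kj b by (intro mult_left_mono) auto
    moreover have "\<beta> * L * al (Suc k) * r k \<le> (1 - \<beta>) * D" using A1 kj by (intro err) simp
    moreover have "Suc n - A = Suc j" using k kj A1 by simp
    ultimately show ?thesis by (simp add: algebra_simps)
  qed
  have upper: "(\<Sum>n\<in>W. al (Suc n) * p n) \<le> (hi - lo) + L * MB * aU\<^sup>2"
  proof -
    have "(\<Sum>n\<in>W. al (Suc n) * p n) \<le> (\<Sum>n\<in>W. (F n - F (Suc n)) + L / 2 * (\<rho>\<^sup>2 * MB))"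
    proof (rule sum_mono)
      fix n assume n: "n \<in> W"
      have "(al (Suc n))\<^sup>2 * r n \<le> (al (Suc n))\<^sup>2 * MB" using r_b by (intro mult_left_mono) auto
      also have "\<dots> \<le> \<rho>\<^sup>2 * MB" using al_up[of n] al_pos[of "Suc n"] n pos unfolding W_def
        by (intro mult_right_mono power_mono) auto
      finally have "L / 2 * ((al (Suc n))\<^sup>2 * r n) \<le> L / 2 * (\<rho>\<^sup>2 * MB)" using pos by (intro mult_left_mono) auto
      then show "al (Suc n) * p n \<le> (F n - F (Suc n)) + L / 2 * (\<rho>\<^sup>2 * MB)" using desc[of n] by (simp add: algebra_simps)
    qed
    also have "\<dots> = (F A - F T) + real m * (L / 2 * (\<rho>\<^sup>2 * MB))"
    proof -
      have "(\<Sum>n\<in>W. F n - F (Suc n)) = - (\<Sum>n\<in>W. F (Suc n) - F n)"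
        by (simp add: sum_negf[symmetric])
      also have "\<dots> = F A - F T" using sum_Suc_diff'[of A T F] AT unfolding W_def by simp
      finally have "(\<Sum>n\<in>W. F n - F (Suc n)) = F A - F T" .
      then show ?thesis using cardW by (simp add: sum.distrib)
    qed
    also have "\<dots> \<le> (hi - lo) + L * MB * aU\<^sup>2"
    proof -
      have h1: "F A - F T \<le> hi - lo" using F_b[of A] F_b[of T] by simp
      have h2: "real m * \<rho>\<^sup>2 \<le> 2 * aU\<^sup>2"
      proof -
        have "real m * \<rho>\<^sup>2 = real m * aU\<^sup>2 / real A" unfolding \<rho>_def using A1 by (simp add: power_divide)
        also have "\<dots> \<le> 2 * real A * aU\<^sup>2 / real A" using m_le by (intro divide_right_mono mult_right_mono) auto
        also have "\<dots> = 2 * aU\<^sup>2" using A1 by simp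
        finally show ?thesis .
      qed
      have h3: "(L / 2 * MB) * (real m * \<rho>\<^sup>2) \<le> (L / 2 * MB) * (2 * aU\<^sup>2)"
        using h2 pos by (intro mult_left_mono) auto
      have e1: "real m * (L / 2 * (\<rho>\<^sup>2 * MB)) = (L / 2 * MB) * (real m * \<rho>\<^sup>2)" by simp
      have e2: "(L / 2 * MB) * (2 * aU\<^sup>2) = L * MB * aU\<^sup>2" by simp
      show ?thesis using h1 h3 e1 e2 by linarith
    qed
    finally show ?thesis .
  qed
  define sT where "sT = aL / sqrt (real T)"
  have sT_pos: "sT > 0" unfolding sT_def using pos T by simp
  have lower: "(\<Sum>n\<in>W. (1 - \<beta>) * sT * q n - \<rho> * PB * \<beta> ^ (Suc n - A) - \<rho> * D) \<le> (\<Sum>n\<in>W. al (Suc n) * p n)"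
  proof (rule sum_mono)
    fix n assume n: "n \<in> W"
    have alp: "al (Suc n) > 0" using al_pos[of "Suc n"] by simp
    have alu: "al (Suc n) \<le> \<rho>" using al_up[of n] n unfolding W_def by simp
    have all: "sT \<le> al (Suc n)" using al_lo[of n] n unfolding W_def sT_def by simp
    have "al (Suc n) * ((1 - \<beta>) * q n - \<beta> ^ (Suc n - A) * PB - D) \<le> al (Suc n) * p n"
      using claim2[OF n] alp by (intro mult_left_mono) auto
    moreover have "sT * ((1 - \<beta>) * q n) \<le> al (Suc n) * ((1 - \<beta>) * q n)"
      using all q_nn[of n] b by (intro mult_right_mono) auto
    moreover have "al (Suc n) * (\<beta> ^ (Suc n - A) * PB) \<le> \<rho> * (\<beta> ^ (Suc n - A) * PB)"
      using alu b pos by (intro mult_right_mono) auto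
    moreover have "al (Suc n) * D \<le> \<rho> * D" using alu D_nn by (intro mult_right_mono) auto
    ultimately show "(1 - \<beta>) * sT * q n - \<rho> * PB * \<beta> ^ (Suc n - A) - \<rho> * D \<le> al (Suc n) * p n"
      by (simp add: algebra_simps)
  qed
  have lsum: "(\<Sum>n\<in>W. (1 - \<beta>) * sT * q n - \<rho> * PB * \<beta> ^ (Suc n - A) - \<rho> * D)
      = (1 - \<beta>) * sT * (\<Sum>n\<in>W. q n) - \<rho> * PB * (\<Sum>n\<in>W. \<beta> ^ (Suc n - A)) - real m * (\<rho> * D)"
    by (simp add: sum_subtractf sum_distrib_left cardW)
  have geo: "(\<Sum>n\<in>W. \<beta> ^ (Suc n - A)) \<le> 1 / (1 - \<beta>)" unfolding W_def using b AT by (intro geo_sum) auto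
  have t2: "\<rho> * PB * (\<Sum>n\<in>W. \<beta> ^ (Suc n - A)) \<le> aU * PB / (1 - \<beta>)"
  proof -
    have "\<rho> * PB * (\<Sum>n\<in>W. \<beta> ^ (Suc n - A)) \<le> \<rho> * PB * (1 / (1 - \<beta>))"
      using geo rho_pos pos by (intro mult_left_mono) auto
    also have "\<dots> \<le> aU * PB * (1 / (1 - \<beta>))" using rho_le pos b by (intro mult_right_mono) auto
    finally show ?thesis by simp
  qed
  have t3: "real m * (\<rho> * D) \<le> 2 * \<beta> * L * MB * aU\<^sup>2 / (1 - \<beta>)"
  proof -
    have h2: "real m * \<rho>\<^sup>2 \<le> 2 * aU\<^sup>2"
    proof -
      have "real m * \<rho>\<^sup>2 = real m * aU\<^sup>2 / real A" unfolding \<rho>_def using A1 by (simp add: power_divide)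
      also have "\<dots> \<le> 2 * real A * aU\<^sup>2 / real A" using m_le by (intro divide_right_mono mult_right_mono) auto
      also have "\<dots> = 2 * aU\<^sup>2" using A1 by simp
      finally show ?thesis .
    qed
    have c: "0 \<le> \<beta> * L * MB / (1 - \<beta>)" using b pos by simp
    have "real m * (\<rho> * D) = (real m * \<rho>\<^sup>2) * (\<beta> * L * MB / (1 - \<beta>))"
      unfolding D_def by (simp add: power2_eq_square)
    also have "\<dots> \<le> (2 * aU\<^sup>2) * (\<beta> * L * MB / (1 - \<beta>))" using h2 c by (rule mult_right_mono)
    also have "\<dots> = 2 * \<beta> * L * MB * aU\<^sup>2 / (1 - \<beta>)" by (simp add: field_simps)
    finally show ?thesis .
  qed
  define C' where "C' = (hi - lo) + L * MB * aU\<^sup>2 + aU * PB / (1 - \<beta>) + 2 * \<beta> * L * MB * aU\<^sup>2 / (1 - \<beta>)"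
  have main: "(1 - \<beta>) * sT * (\<Sum>n\<in>W. q n) \<le> C'"
    using upper lower lsum t2 t3 unfolding C'_def by linarith
  have C'_nn: "C' \<ge> 0"
  proof -
    have "0 \<le> (1 - \<beta>) * sT * (\<Sum>n\<in>W. q n)" using b sT_pos q_nn by (intro mult_nonneg_nonneg sum_nonneg) auto
    then show ?thesis using main by linarith
  qed
  define K' where "K' = C' / ((1 - \<beta>) * aL)"
  have K'_nn: "K' \<ge> 0" unfolding K'_def using C'_nn b pos by simp
  have sumq: "(\<Sum>n\<in>W. q n) \<le> K' * sqrt (real T)"
  proof -
    have "(1 - \<beta>) * sT > 0" using b sT_pos by simp
    then have "(\<Sum>n\<in>W. q n) \<le> C' / ((1 - \<beta>) * sT)" using main by (simp add: field_simps)
    also have "C' / ((1 - \<beta>) * sT) = K' * sqrt (real T)" unfolding K'_def sT_def using b pos T by (simp add: field_simps)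
    finally show ?thesis .
  qed
  have Wne: "W \<noteq> {}" "finite W" unfolding W_def using AT by auto
  define qm where "qm = Min (q ` W)"
  have "qm \<in> q ` W" unfolding qm_def using Wne by (intro Min_in) auto
  then obtain n where n: "n \<in> W" "q n = qm" by auto
  have "real (card W) * qm \<le> (\<Sum>n\<in>W. q n)" unfolding qm_def using Wne by (intro sum_bounded_below) auto
  then have mq: "real m * q n \<le> K' * sqrt (real T)" using sumq n cardW by simp
  have mpos: "real m > 0" using AT unfolding m_def by simp
  have "q n \<le> K' * sqrt (real T) / real m" using mq mpos by (simp add: field_simps)
  also have "\<dots> \<le> 2 * K' / sqrt (real T)"
  proof -
    have sq: "sqrt (real T) * sqrt (real T) = real T" by simp
    have k1: "K' * real T \<le> K' * (2 * real m)" using m_ge K'_nn by (rule mult_left_mono)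
    have k2: "K' * sqrt (real T) * sqrt (real T) = K' * real T" by (simp add: mult.assoc)
    have sTp: "sqrt (real T) > 0" using T by simp
    have "K' * sqrt (real T) * sqrt (real T) \<le> 2 * K' * real m" using k1 k2 by (simp only: mult.assoc mult.left_commute[of 2])
    then show ?thesis using mpos sTp by (simp add: divide_le_eq le_divide_eq mult.commute mult.left_commute)
  qed
  finally have "q n \<le> 2 * K' / sqrt (real T)" .
  moreover have "2 * K' = 2 * C' / ((1 - \<beta>) * aL)" unfolding K'_def by simp
  ultimately show ?thesis using n unfolding W_def A_def C'_def by auto
qed

context adopt_loc begin

definition "pE n = (\<integral>x. P n x \<partial>M)"
definition "qE n = (\<integral>x. R n x \<partial>M)"
definition "rE n = (\<integral>x. (norm (mm n x))\<^sup>2 \<partial>M)"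
definition "FE n = (\<integral>x. f (th n x) \<partial>M)"

lemma f_int: "integrable M (\<lambda>x. f (th n x))"
proof (rule finite_measure.integrable_const_bound[where B="\<bar>f_inf\<bar> + \<bar>f_sup\<bar>"])
  show "finite_measure M" by (rule finite_measure_axioms)
  show "(\<lambda>x. f (th n x)) \<in> borel_measurable M" by measurable
  show "AE x in M. norm (f (th n x)) \<le> \<bar>f_inf\<bar> + \<bar>f_sup\<bar>"
  proof (intro AE_I2)
    fix x show "norm (f (th n x)) \<le> \<bar>f_inf\<bar> + \<bar>f_sup\<bar>" using bounded[of "th n x"] by auto
  qed
qed

lemma FE_b: "f_inf \<le> FE n \<and> FE n \<le> f_sup"
proof
  have "(\<integral>x. f_inf \<partial>M) \<le> FE n" unfolding FE_def
    using bounded by (intro integral_mono f_int) auto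
  then show "f_inf \<le> FE n" by (simp add: prob_space)
  have "FE n \<le> (\<integral>x. f_sup \<partial>M)" unfolding FE_def
    using bounded by (intro integral_mono f_int) auto
  then show "FE n \<le> f_sup" by (simp add: prob_space)
qed

lemma desc_pt: "f (th (Suc n) x) \<le> f (th n x) - alpha (Suc n) * P n x + L / 2 * (alpha (Suc n))\<^sup>2 * (norm (mm n x))\<^sup>2"
proof -
  have "f (th (Suc n) x) \<le> f (th n x) + df (th n x) \<bullet> (th (Suc n) x - th n x) + L / 2 * (norm (th (Suc n) x - th n x))\<^sup>2"
    by (rule descent[OF grad smooth])
  moreover have "th (Suc n) x - th n x = - (alpha (Suc n) *\<^sub>R mm n x)" by (simp add: th_Suc)
  moreover have "(norm (alpha (Suc n) *\<^sub>R mm n x))\<^sup>2 = (alpha (Suc n))\<^sup>2 * (norm (mm n x))\<^sup>2"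
    by (simp add: power_mult_distrib)
  ultimately show ?thesis by (simp add: P_def)
qed

lemma desc_E: "FE (Suc n) \<le> FE n - alpha (Suc n) * pE n + L / 2 * (alpha (Suc n))\<^sup>2 * rE n"
proof -
  have "FE (Suc n) \<le> (\<integral>x. f (th n x) - alpha (Suc n) * P n x + L / 2 * (alpha (Suc n))\<^sup>2 * (norm (mm n x))\<^sup>2 \<partial>M)"
    unfolding FE_def
  proof (rule integral_mono[OF f_int _ desc_pt])
    show "integrable M (\<lambda>x. f (th n x) - alpha (Suc n) * P n x + L / 2 * (alpha (Suc n))\<^sup>2 * (norm (mm n x))\<^sup>2)"
      using f_int P_int mm_sq_int by simp
  qed
  also have "\<dots> = FE n - alpha (Suc n) * pE n + L / 2 * (alpha (Suc n))\<^sup>2 * rE n"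
    unfolding FE_def pE_def rE_def using f_int P_int mm_sq_int by simp
  finally show ?thesis .
qed

lemma rec_pt: "P (Suc n) x \<ge> beta1 * P n x - beta1 * L * alpha (Suc n) * (norm (mm n x))\<^sup>2 + (1 - beta1) * Q (Suc n) x"
proof -
  have a: "alpha (Suc n) > 0" using alpha_pos[of "Suc n"] by simp
  have eq: "P (Suc n) x = beta1 * (df (th (Suc n) x) \<bullet> mm n x) + (1 - beta1) * Q (Suc n) x"
    by (simp add: P_def Q_def mm_Suc inner_add_right)
  have "(df (th (Suc n) x) - df (th n x)) \<bullet> mm n x \<ge> - (norm (df (th (Suc n) x) - df (th n x)) * norm (mm n x))"
    using Cauchy_Schwarz_ineq2[of "df (th (Suc n) x) - df (th n x)" "mm n x"] by linarith
  moreover have "norm (df (th (Suc n) x) - df (th n x)) * norm (mm n x) \<le> L * norm (th (Suc n) x - th n x) * norm (mm n x)"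
    using smooth by (intro mult_right_mono) auto
  moreover have "norm (th (Suc n) x - th n x) = alpha (Suc n) * norm (mm n x)" using a by (simp add: th_Suc)
  ultimately have "df (th (Suc n) x) \<bullet> mm n x \<ge> P n x - L * alpha (Suc n) * (norm (mm n x))\<^sup>2"
    by (simp add: P_def inner_diff_left power2_eq_square algebra_simps)
  then have "beta1 * (df (th (Suc n) x) \<bullet> mm n x) \<ge> beta1 * (P n x - L * alpha (Suc n) * (norm (mm n x))\<^sup>2)"
    using beta1 by (intro mult_left_mono) auto
  then show ?thesis unfolding eq by (simp add: algebra_simps)
qed

lemma rec_E: "pE (Suc n) \<ge> beta1 * pE n - beta1 * L * alpha (Suc n) * rE n + (1 - beta1) * qE (Suc n)"
proof -
  have "(\<integral>x. beta1 * P n x - beta1 * L * alpha (Suc n) * (norm (mm n x))\<^sup>2 + (1 - beta1) * Q (Suc n) x \<partial>M) \<le> pE (Suc n)"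
    unfolding pE_def
  proof (rule integral_mono[OF _ P_int rec_pt])
    show "integrable M (\<lambda>x. beta1 * P n x - beta1 * L * alpha (Suc n) * (norm (mm n x))\<^sup>2 + (1 - beta1) * Q (Suc n) x)"
      using Q_int P_int mm_sq_int by simp
  qed
  moreover have "(\<integral>x. beta1 * P n x - beta1 * L * alpha (Suc n) * (norm (mm n x))\<^sup>2 + (1 - beta1) * Q (Suc n) x \<partial>M)
     = beta1 * pE n - beta1 * L * alpha (Suc n) * rE n + (1 - beta1) * qE (Suc n)"
    unfolding pE_def rE_def qE_def using Q_int P_int mm_sq_int Q_E[of "Suc n"] by simp
  ultimately show ?thesis by simp
qed

end

context adopt_loc begin

lemma final:
  "\<exists>K. \<forall>T::nat. T \<ge> 1 \<longrightarrow>
     Min ((\<lambda>t. (\<integral>x. (norm (df (adopt_theta beta1 beta2 eps alpha theta0 (\<lambda>s. g s x) (t - 1))))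
                       powr (4/3) \<partial>M) powr (3/2)) ` {1..T})
     \<le> K / sqrt (real T)"
proof -
  define val where "val t = (\<integral>x. norm (df (th (t - 1) x)) powr (4/3) \<partial>M) powr (3/2)" for t :: nat
  have fn: "(\<lambda>t. (\<integral>x. (norm (df (adopt_theta beta1 beta2 eps alpha theta0 (\<lambda>s. g s x) (t - 1)))) powr (4/3) \<partial>M) powr (3/2)) = val"
    unfolding val_def th_adopt by simp
  define S where "S = G\<^sup>2 + eps\<^sup>2"
  define P0 where "P0 = B * (1 + M2)"
  define C2 where "C2 = 2 * ((f_sup - f_inf) + L * M2 * a2\<^sup>2 + a2 * P0 / (1 - beta1)
            + 2 * beta1 * L * M2 * a2\<^sup>2 / (1 - beta1)) / ((1 - beta1) * a1)"
  define K1 where "K1 = (2/3 * (B\<^sup>2 / eps) + S / 3) powr (3/2)"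
  define K0 where "K0 = 2/3 * C2 + S / 3"
  define K where "K = max K1 (K0 powr (3/2))"
  have E_nn: "0 \<le> (\<integral>x. norm (df (th n x)) powr (4/3) \<partial>M)" for n
    by (rule integral_nonneg_AE) auto
  have M2_nn: "0 \<le> M2" unfolding M2_def by simp
  have P0_nn: "0 \<le> P0" unfolding P0_def using B_nonneg M2_nn by simp
  have qE_nn: "0 \<le> qE n" for n unfolding qE_def by (rule integral_nonneg_AE) (auto intro: R_nonneg)
  have bound: "Min (val ` {1..T'}) \<le> K / sqrt (real T')" if T': "T' \<ge> 1" for T'
  proof (cases "T' = 1")
    case True
    have "(\<integral>x. norm (df (th 0 x)) powr (4/3) \<partial>M) \<le> 2/3 * 1 * qE 0 + (G\<^sup>2 + eps\<^sup>2) / (3 * 1\<^sup>2)"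
      using holder_E[of 1 0] unfolding qE_def by simp
    also have "\<dots> \<le> 2/3 * (B\<^sup>2 / eps) + S / 3"
      using R_E_upper[of 0] unfolding qE_def S_def by simp
    finally have "val 1 \<le> K1" unfolding val_def K1_def using E_nn[of 0] by (intro powr_mono2) auto
    then show ?thesis using True unfolding K_def by simp
  next
    case False
    then have T2: "T' \<ge> 2" using T' by simp
    have pb: "\<And>k. \<bar>pE k\<bar> \<le> P0" unfolding pE_def P0_def by (rule p_bound)
    have rb: "\<And>k. rE k \<le> M2" unfolding rE_def by (rule mm_sq_E)
    have "\<exists>n\<in>{T' div 2..<T'}. qE n \<le> C2 / sqrt (real T')" unfolding C2_def
      by (rule window[where p=pE and q=qE and r=rE and F=FE and al=alpha and \<beta>=beta1 and PB=P0 and MB=M2 and L=L and lo=f_inf and hi=f_sup and aL=a1 and aU=a2 and T=T',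
           OF beta1 qE_nn pb rb FE_b desc_E rec_E lr a(1) L_pos M2_nn P0_nn T2])
    then obtain n where n: "n \<in> {T' div 2..<T'}" and qn: "qE n \<le> C2 / sqrt (real T')" by blast
    define l where "l = real T' powr (1/6)"
    have Tpos: "real T' > 0" using T' by simp
    have lpos: "l > 0" unfolding l_def using Tpos by simp
    have sq: "sqrt (real T') = real T' powr (1/2)" using Tpos by (simp add: powr_half_sqrt)
    have l2: "l\<^sup>2 = real T' powr (1/3)"
    proof -
      have "l\<^sup>2 = real T' powr (1/6) * real T' powr (1/6)" unfolding l_def by (simp add: power2_eq_square)
      also have "\<dots> = real T' powr (1/6 + 1/6)" by (rule powr_add[symmetric])
      finally show ?thesis by simp
    qed
    have "(\<integral>x. norm (df (th n x)) powr (4/3) \<partial>M) \<le> 2/3 * l * qE n + (G\<^sup>2 + eps\<^sup>2) / (3 * l\<^sup>2)"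
      using holder_E[OF lpos, of n] unfolding qE_def by simp
    also have "\<dots> \<le> 2/3 * l * (C2 / sqrt (real T')) + S / (3 * l\<^sup>2)"
      using qn lpos unfolding S_def by (intro add_mono mult_left_mono) auto
    also have "\<dots> = K0 * real T' powr (-1/3)"
    proof -
      have e1: "l / sqrt (real T') = real T' powr (-1/3)"
      proof -
        have "l / sqrt (real T') = real T' powr (1/6 - 1/2)" unfolding l_def sq by (rule powr_diff[symmetric])
        moreover have "(1/6 - 1/2 :: real) = -1/3" by simp
        ultimately show ?thesis by (simp only:)
      qed
      have e2: "1 / l\<^sup>2 = real T' powr (-1/3)"
      proof -
        have "real T' powr (-(1/3)) = inverse (real T' powr (1/3))" by (rule powr_minus)
        moreover have "(-1/3 :: real) = -(1/3)" by simp
        ultimately show ?thesis unfolding l2 by (simp only: inverse_eq_divide)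
      qed
      have h1: "2/3 * l * (C2 / sqrt (real T')) = 2/3 * C2 * (l / sqrt (real T'))" by (simp add: ac_simps)
      have h2: "S / (3 * l\<^sup>2) = S / 3 * (1 / l\<^sup>2)" by simp
      have "2/3 * l * (C2 / sqrt (real T')) + S / (3 * l\<^sup>2) = 2/3 * C2 * (l / sqrt (real T')) + S / 3 * (1 / l\<^sup>2)"
        by (simp only: h1 h2)
      also have "\<dots> = K0 * real T' powr (-1/3)" unfolding e1 e2 K0_def by (rule distrib_right[symmetric])
      finally show ?thesis .
    qed
    finally have Eb: "(\<integral>x. norm (df (th n x)) powr (4/3) \<partial>M) \<le> K0 * real T' powr (-1/3)" .
    have tp: "real T' powr (-1/3) > 0" using Tpos by simp
    have K0nn: "0 \<le> K0"
    proof -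
      have "0 \<le> K0 * real T' powr (-1/3)" using Eb E_nn[of n] by linarith
      then show ?thesis using tp by (simp add: zero_le_mult_iff)
    qed
    have vS: "val (Suc n) = (\<integral>x. norm (df (th n x)) powr (4/3) \<partial>M) powr (3/2)" unfolding val_def by simp
    have "val (Suc n) \<le> (K0 * real T' powr (-1/3)) powr (3/2)"
      unfolding vS using Eb E_nn[of n] by (intro powr_mono2) auto
    also have "\<dots> = K0 powr (3/2) * (real T' powr (-1/3)) powr (3/2)"
      using K0nn tp by (intro powr_mult)
    also have "(real T' powr (-1/3)) powr (3/2) = real T' powr (-1/3 * (3/2))" by (rule powr_powr)
    also have "\<dots> = 1 / sqrt (real T')"
    proof -
      have "(-1/3 * (3/2) :: real) = - (1/2)" by simp
      then have "real T' powr (-1/3 * (3/2)) = inverse (real T' powr (1/2))" by (simp only: powr_minus)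
      then show ?thesis unfolding sq by (simp only: inverse_eq_divide)
    qed
    also have "K0 powr (3/2) * (1 / sqrt (real T')) = K0 powr (3/2) / sqrt (real T')" by simp
    also have "\<dots> \<le> K / sqrt (real T')" unfolding K_def using Tpos by (intro divide_right_mono) auto
    finally have vb: "val (Suc n) \<le> K / sqrt (real T')" .
    have "Suc n \<in> {1..T'}" using n by auto
    then have "Min (val ` {1..T'}) \<le> val (Suc n)" by (intro Min_le) auto
    then show ?thesis using vb by linarith
  qed
  show ?thesis unfolding fn using bound by blast
qed

end

theorem theoremE1:
  fixes M :: "'a measure"
    and f :: "real^'d \<Rightarrow> real" and df :: "real^'d \<Rightarrow> real^'d"
    and L f_inf f_sup beta1 beta2 eps a1 a2 G :: real
    and alpha :: "nat \<Rightarrow> real" and theta0 :: "real^'d"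
    and g :: "nat \<Rightarrow> 'a \<Rightarrow> real^'d"
  assumes grad: "\<And>x. GDERIV f x :> df x"
    and L_pos: "L > 0"
    and smooth: "\<And>x y. norm (df x - df y) \<le> L * norm (x - y)"
    and bounded: "\<And>x. f_inf \<le> f x \<and> f x \<le> f_sup"
    and beta1: "0 \<le> beta1" "beta1 < 1"
    and beta2: "0 \<le> beta2" "beta2 < 1"
    and eps: "eps > 0"
    and a: "0 < a1" "a1 \<le> a2"
    and lr: "\<And>t. t \<ge> 1 \<Longrightarrow> a1 / sqrt (real t) \<le> alpha t \<and> alpha t \<le> a2 / sqrt (real t)"
    and P: "prob_space M"
    and G: "G > 0"
    and g_meas: "\<And>t. g t \<in> borel_measurable M"
    and g_moment: "\<And>t. (\<integral>\<^sup>+ x. ennreal ((norm (g t x))\<^sup>2) \<partial>M) \<le> ennreal (G\<^sup>2)"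
    and g_unbiased: "\<And>t i. t \<ge> 1 \<Longrightarrow>
        AE x in M. real_cond_exp M (gen_filtration M g t) (\<lambda>y. g t y $ i) x
          = df (adopt_theta beta1 beta2 eps alpha theta0 (\<lambda>s. g s x) (t - 1)) $ i"
  shows "\<exists>K. \<forall>T::nat. T \<ge> 1 \<longrightarrow>
     Min ((\<lambda>t. (\<integral>x. (norm (df (adopt_theta beta1 beta2 eps alpha theta0 (\<lambda>s. g s x) (t - 1))))
                       powr (4/3) \<partial>M) powr (3/2)) ` {1..T})
     \<le> K / sqrt (real T)"
proof -
  have "adopt_loc M f df L f_inf f_sup beta1 beta2 eps a1 a2 G alpha theta0 g"
    by (intro adopt_loc.intro adopt_loc_axioms.intro P grad L_pos smooth bounded beta1 beta2 eps a lr G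
        g_meas g_moment g_unbiased)
  from adopt_loc.final[OF this] show ?thesis .
qed

end
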